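(* Let $X$ be a real reflexive Banach space, $f:X\to\mathbb{R}\cup\{+\infty\}$ a lower semicontinuous proper convex function, $f^{FY}(x,x^{\ast}):=f(x)+f^{\ast}(x^{\ast})$, and let $h\in\mathcal{H}(\partial f)$ satisfy $h\le f^{FY}$. Then for every $(x,x^{\ast})\in X\times X^{\ast}$, $$h(x,x^{\ast})+h^{\ast}(x^{\ast},x)\ge\langle x,x^{\ast}\rangle+f(x)+f^{\ast}(x^{\ast}).$$
   Context: $X^{\ast}$ is the dual of $X$ with pairing $\langle\cdot,\cdot\rangle$; $f^{\ast}(x^{\ast})=\sup_x\{\langle x,x^{\ast}\rangle-f(x)\}$ and $\partial f$ is the convex subdifferential of $f$. The dual of $X\times X^{\ast}$ is identified with $X^{\ast}\times X$ via $\langle (x,x^{\ast}),(y^{\ast},y)\rangle=\langle x,y^{\ast}\rangle+\langle y,x^{\ast}\rangle$, and $h^{\ast}(y^{\ast},y)=\sup_{(x,x^{\ast})}\{\langle x,y^{\ast}\rangle+\langle y,x^{\ast}\rangle-h(x,x^{\ast})\}$. For a maximally monotone $T$, $\mathcal{H}(T)$ is the family of lower semicontinuous convex $h:X\times X^{\ast}\to\mathbb{R}\cup\{+\infty\}$ with $h(x,x^{\ast})\ge\langle x,x^{\ast}\rangle$ everywhere and equality whenever $x^{\ast}\in T(x)$. *)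

theory Defs
  imports "HOL-Analysis.Analysis" "HOL-Library.Extended_Real"
begin

text \<open>The dual X* of a real Banach space X is the space of bounded linear
functionals 'a \<Rightarrow>L real; the pairing is application.  Extended-real valued
functions are modelled by ereal with values in the reals plus +infinity.\<close>

definition reflexive_space :: "'a::banach itself \<Rightarrow> bool" where
  "reflexive_space _ \<longleftrightarrow>
     (\<forall>\<Phi> :: ('a \<Rightarrow>\<^sub>L real) \<Rightarrow>\<^sub>L real. \<exists>x::'a. \<forall>\<phi>. blinfun_apply \<Phi> \<phi> = blinfun_apply \<phi> x)"

definition lsc_fun :: "('b::topological_space \<Rightarrow> ereal) \<Rightarrow> bool" where
  "lsc_fun f \<longleftrightarrow> (\<forall>c::real. closed {x. f x \<le> ereal c})"

definition convex_efun :: "('b::real_vector \<Rightarrow> ereal) \<Rightarrow> bool" where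
  "convex_efun f \<longleftrightarrow> (\<forall>x y. \<forall>t::real. 0 < t \<and> t < 1 \<longrightarrow>
       f ((1 - t) *\<^sub>R x + t *\<^sub>R y) \<le> ereal (1 - t) * f x + ereal t * f y)"

definition proper_efun :: "('b \<Rightarrow> ereal) \<Rightarrow> bool" where
  "proper_efun f \<longleftrightarrow> (\<forall>x. f x \<noteq> -\<infinity>) \<and> (\<exists>x. f x \<noteq> \<infinity>)"

definition fconj :: "('a::real_normed_vector \<Rightarrow> ereal) \<Rightarrow> ('a \<Rightarrow>\<^sub>L real) \<Rightarrow> ereal" where
  "fconj f xs = (SUP x. ereal (blinfun_apply xs x) - f x)"

definition conj2 :: "('a::real_normed_vector \<times> ('a \<Rightarrow>\<^sub>L real) \<Rightarrow> ereal)
      \<Rightarrow> ('a \<Rightarrow>\<^sub>L real) \<times> 'a \<Rightarrow> ereal" where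
  "conj2 h p = (SUP q. ereal (blinfun_apply (fst p) (fst q) + blinfun_apply (snd q) (snd p)) - h q)"

definition subdiff :: "('a::real_normed_vector \<Rightarrow> ereal) \<Rightarrow> 'a \<Rightarrow> ('a \<Rightarrow>\<^sub>L real) set" where
  "subdiff f x = {xs. f x \<noteq> \<infinity> \<and> f x \<noteq> -\<infinity> \<and>
       (\<forall>y. f x + ereal (blinfun_apply xs (y - x)) \<le> f y)}"

definition repr_family :: "('a::real_normed_vector \<Rightarrow> ('a \<Rightarrow>\<^sub>L real) set)
      \<Rightarrow> ('a \<times> ('a \<Rightarrow>\<^sub>L real) \<Rightarrow> ereal) set" where
  "repr_family T = {h. lsc_fun h \<and> convex_efun h \<and>
       (\<forall>x xs. ereal (blinfun_apply xs x) \<le> h (x, xs)) \<and>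
       (\<forall>x xs. xs \<in> T x \<longrightarrow> h (x, xs) = ereal (blinfun_apply xs x))}"

end

theory Submission
  imports Defs
begin


definition pf :: "('v::real_vector \<Rightarrow> real) \<Rightarrow> ('v \<times> real) set \<Rightarrow> bool" where
"pf p G \<longleftrightarrow> (0,0) \<in> G \<and> (\<forall>x a b. (x,a)\<in>G \<longrightarrow> (x,b)\<in>G \<longrightarrow> a = b) \<and>
   (\<forall>x a y b. (x,a)\<in>G \<longrightarrow> (y,b)\<in>G \<longrightarrow> (x+y,a+b)\<in>G) \<and>
   (\<forall>x a t. (x,a)\<in>G \<longrightarrow> (t *\<^sub>R x, t*a)\<in>G) \<and> (\<forall>x a. (x,a)\<in>G \<longrightarrow> a \<le> p x)"

lemma sublin_hom:
  fixes p :: "'v::real_vector \<Rightarrow> real"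
  assumes hom: "\<And>t x. t > 0 \<Longrightarrow> p (t *\<^sub>R x) \<le> t * p x" and t: "t > 0"
  shows "p (t *\<^sub>R x) = t * p x"
proof -
  have "p x = p ((1/t) *\<^sub>R (t *\<^sub>R x))" using t by simp
  also have "\<dots> \<le> (1/t) * p (t *\<^sub>R x)" using hom[of "1/t" "t *\<^sub>R x"] t by simp
  finally have "t * p x \<le> p (t *\<^sub>R x)" using t by (simp add: field_simps)
  with hom[OF t, of x] show ?thesis by linarith
qed

lemma pf_chain:
  assumes C: "C \<in> chains {G. pf p G}" "C \<noteq> {}"
  shows "pf p (\<Union>C)"
proof -
  have sub: "C \<subseteq> {G. pf p G}" and ch: "\<forall>A\<in>C. \<forall>B\<in>C. A \<subseteq> B \<or> B \<subseteq> A"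
    using C unfolding chains_def chain_subset_def by auto
  obtain G0 where "G0 \<in> C" using C by auto
  have two: "\<exists>G\<in>C. u \<in> G \<and> v \<in> G" if "u \<in> \<Union>C" "v \<in> \<Union>C" for u v
    using that ch by blast
  show ?thesis unfolding pf_def
  proof (intro conjI allI impI)
    show "(0,0) \<in> \<Union>C" using \<open>G0 \<in> C\<close> sub unfolding pf_def by auto
  next
    fix x a b
    assume "(x,a) \<in> \<Union>C" "(x,b) \<in> \<Union>C"
    then obtain G where "G \<in> C" "(x,a) \<in> G" "(x,b) \<in> G" using two by blast
    then show "a = b" using sub unfolding pf_def by blast
  next
    fix x a y b
    assume "(x,a) \<in> \<Union>C" "(y,b) \<in> \<Union>C"
    then obtain G where "G \<in> C" "(x,a) \<in> G" "(y,b) \<in> G" using two by blast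
    then show "(x+y,a+b) \<in> \<Union>C" using sub unfolding pf_def by blast
  next
    fix x a t
    assume "(x,a) \<in> \<Union>C"
    then obtain G where "G \<in> C" "(x,a) \<in> G" by blast
    then show "(t *\<^sub>R x, t*a) \<in> \<Union>C" using sub unfolding pf_def by blast
  next
    fix x a
    assume "(x,a) \<in> \<Union>C"
    then obtain G where "G \<in> C" "(x,a) \<in> G" by blast
    then show "a \<le> p x" using sub unfolding pf_def by blast
  qed
qed

lemma pf_extend:
  fixes p :: "'v::real_vector \<Rightarrow> real"
  assumes add: "\<And>x y. p (x+y) \<le> p x + p y"
    and hom: "\<And>t x. t > 0 \<Longrightarrow> p (t *\<^sub>R x) \<le> t * p x"
    and G: "pf p G" and y: "\<And>a. (y,a) \<notin> G"
  shows "\<exists>G'. pf p G' \<and> G \<subset> G'"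
proof -
  have G0: "(0,0) \<in> G" and uniq: "\<And>x a b. (x,a)\<in>G \<Longrightarrow> (x,b)\<in>G \<Longrightarrow> a = b"
    and gadd: "\<And>x a z b. (x,a)\<in>G \<Longrightarrow> (z,b)\<in>G \<Longrightarrow> (x+z,a+b)\<in>G"
    and gsc: "\<And>x a t. (x,a)\<in>G \<Longrightarrow> (t *\<^sub>R x, t*a)\<in>G"
    and gp: "\<And>x a. (x,a)\<in>G \<Longrightarrow> a \<le> p x" using G unfolding pf_def by blast+
  have homeq: "\<And>t x. t > 0 \<Longrightarrow> p (t *\<^sub>R x) = t * p x" using sublin_hom[OF hom] by blast
  define L where "L = {a - p (s - y) | s a. (s,a) \<in> G}"
  define c where "c = Sup L"
  have Lne: "L \<noteq> {}" using G0 unfolding L_def by blast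
  have Lbdd: "bdd_above L"
  proof (rule bdd_aboveI)
    fix l
    assume "l \<in> L"
    then obtain s a where l: "l = a - p (s - y)" "(s,a) \<in> G" unfolding L_def by blast
    have "a \<le> p s" using gp l by blast
    also have "p s \<le> p (s - y) + p y" using add[of "s - y" y] by simp
    finally show "l \<le> p y" using l by simp
  qed
  have cup: "a - p (s - y) \<le> c" if "(s,a) \<in> G" for s a
    unfolding c_def by (rule cSup_upper[OF _ Lbdd]) (use that L_def in blast)
  have clow: "c \<le> p (s + y) - a" if "(s,a) \<in> G" for s a
    unfolding c_def
  proof (rule cSup_least[OF Lne])
    fix l
    assume "l \<in> L"
    then obtain s1 a1 where l: "l = a1 - p (s1 - y)" "(s1,a1) \<in> G" unfolding L_def by blast
    have "a1 + a \<le> p (s1 + s)" using gp gadd l that by blast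
    also have "\<dots> \<le> p (s1 - y) + p (s + y)" using add[of "s1 - y" "s + y"] by (simp add: algebra_simps)
    finally show "l \<le> p (s + y) - a" using l by simp
  qed
  define G' where "G' = {(s + t *\<^sub>R y, a + t * c) | s a t. (s,a) \<in> G}"
  have ydom: False if "(s,a) \<in> G" "(s',a') \<in> G" "s + t *\<^sub>R y = s' + t' *\<^sub>R y" "t \<noteq> t'" for s a s' a' t t'
  proof -
    have "(s' + (-1) *\<^sub>R s, a' + (-1) * a) \<in> G" using gadd gsc that by blast
    then have "((1/(t - t')) *\<^sub>R (s' + (-1) *\<^sub>R s), (1/(t-t')) * (a' + (-1) * a)) \<in> G" using gsc by blast
    moreover have "(1/(t - t')) *\<^sub>R (s' + (-1) *\<^sub>R s) = y"
    proof -
      have "s' - s = (t - t') *\<^sub>R y" using that(3) by (simp add: algebra_simps)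
      then show ?thesis using that(4) by simp
    qed
    ultimately show False using y by metis
  qed
  have "pf p G'" unfolding pf_def
  proof (intro conjI allI impI)
    show "(0,0) \<in> G'" unfolding G'_def using G0 by force
  next
    fix x a b
    assume "(x,a) \<in> G'" "(x,b) \<in> G'"
    then obtain s1 a1 t1 s2 a2 t2 where h: "x = s1 + t1 *\<^sub>R y" "a = a1 + t1 * c" "(s1,a1) \<in> G"
      "x = s2 + t2 *\<^sub>R y" "b = a2 + t2 * c" "(s2,a2) \<in> G" unfolding G'_def by blast
    then have "t1 = t2" using ydom by metis
    then have "s1 = s2" using h by simp
    then show "a = b" using h uniq \<open>t1 = t2\<close> by metis
  next
    fix x a z b
    assume "(x,a) \<in> G'" "(z,b) \<in> G'"
    then obtain s1 a1 t1 s2 a2 t2 where h: "x = s1 + t1 *\<^sub>R y" "a = a1 + t1 * c" "(s1,a1) \<in> G"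
      "z = s2 + t2 *\<^sub>R y" "b = a2 + t2 * c" "(s2,a2) \<in> G" unfolding G'_def by blast
    have "(s1 + s2, a1 + a2) \<in> G" using gadd h by blast
    moreover have "x + z = (s1 + s2) + (t1 + t2) *\<^sub>R y" "a + b = (a1 + a2) + (t1 + t2) * c"
      using h by (simp_all add: algebra_simps)
    ultimately show "(x+z, a+b) \<in> G'" unfolding G'_def by blast
  next
    fix x a r
    assume "(x,a) \<in> G'"
    then obtain s1 a1 t1 where h: "x = s1 + t1 *\<^sub>R y" "a = a1 + t1 * c" "(s1,a1) \<in> G"
      unfolding G'_def by blast
    have "(r *\<^sub>R s1, r * a1) \<in> G" using gsc h by blast
    moreover have "r *\<^sub>R x = r *\<^sub>R s1 + (r * t1) *\<^sub>R y" "r * a = r * a1 + (r * t1) * c"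
      using h by (simp_all add: algebra_simps)
    ultimately show "(r *\<^sub>R x, r * a) \<in> G'" unfolding G'_def by blast
  next
    fix x a
    assume "(x,a) \<in> G'"
    then obtain s a1 t where h: "x = s + t *\<^sub>R y" "a = a1 + t * c" "(s,a1) \<in> G"
      unfolding G'_def by blast
    show "a \<le> p x"
    proof (cases "t = 0")
      case True then show ?thesis using h gp by simp
    next
      case False
      show ?thesis
      proof (cases "t > 0")
        case True
        have m: "((1/t) *\<^sub>R s, (1/t) * a1) \<in> G" using gsc h by blast
        have "c \<le> p ((1/t) *\<^sub>R s + y) - (1/t) * a1" using clow[OF m] .
        then have "t * c \<le> t * (p ((1/t) *\<^sub>R s + y) - (1/t) * a1)" using True by simp
        also have "\<dots> = t * p ((1/t) *\<^sub>R s + y) - a1" using True by (simp add: algebra_simps)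
        also have "t * p ((1/t) *\<^sub>R s + y) = p (t *\<^sub>R ((1/t) *\<^sub>R s + y))" using homeq[OF True] by simp
        also have "t *\<^sub>R ((1/t) *\<^sub>R s + y) = s + t *\<^sub>R y" using True by (simp add: algebra_simps)
        finally show ?thesis using h by simp
      next
        case False
        define u where "u = - t"
        have u: "u > 0" using False \<open>t \<noteq> 0\<close> u_def by simp
        have m: "((1/u) *\<^sub>R s, (1/u) * a1) \<in> G" using gsc h by blast
        have "(1/u) * a1 - p ((1/u) *\<^sub>R s - y) \<le> c" using cup[OF m] .
        then have "u * ((1/u) * a1 - p ((1/u) *\<^sub>R s - y)) \<le> u * c" using u by simp
        then have "a1 - u * p ((1/u) *\<^sub>R s - y) \<le> u * c" using u by (simp add: algebra_simps)
        moreover have "u * p ((1/u) *\<^sub>R s - y) = p (u *\<^sub>R ((1/u) *\<^sub>R s - y))" using homeq[OF u] by simp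
        moreover have "u *\<^sub>R ((1/u) *\<^sub>R s - y) = s + t *\<^sub>R y" using u u_def by (simp add: algebra_simps)
        ultimately show ?thesis using h u_def by simp
      qed
    qed
  qed
  moreover have "G \<subseteq> G'" unfolding G'_def by force
  moreover have "(y, c) \<in> G'" unfolding G'_def using G0 by force
  ultimately show ?thesis using y by blast
qed

theorem hahn_banach:
  fixes p :: "'v::real_vector \<Rightarrow> real"
  assumes add: "\<And>x y. p (x+y) \<le> p x + p y"
    and hom: "\<And>t x. t > 0 \<Longrightarrow> p (t *\<^sub>R x) \<le> t * p x"
  shows "\<exists>F. linear F \<and> (\<forall>x. F x \<le> p x)"
proof -
  have p0: "0 \<le> p 0" using hom[of 2 0] by simp
  have pf0: "pf p {(0,0)}" unfolding pf_def using p0 by auto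
  have "\<forall>C\<in>chains {G. pf p G}. \<exists>U\<in>{G. pf p G}. \<forall>X\<in>C. X \<subseteq> U"
  proof
    fix C
    assume C: "C \<in> chains {G. pf p G}"
    show "\<exists>U\<in>{G. pf p G}. \<forall>X\<in>C. X \<subseteq> U"
    proof (cases "C = {}")
      case True then show ?thesis using pf0 by blast
    next
      case False then show ?thesis using pf_chain[OF C False] by blast
    qed
  qed
  from Zorn_Lemma2[OF this] obtain G where G: "pf p G"
    and max: "\<And>X. pf p X \<Longrightarrow> G \<subseteq> X \<Longrightarrow> X = G" by blast
  have dom: "\<exists>a. (x,a) \<in> G" for x
  proof (rule ccontr)
    assume "\<not> ?thesis"
    then obtain G' where "pf p G'" "G \<subset> G'" using pf_extend[OF add hom G] by blast
    then show False using max by blast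
  qed
  have uniq: "\<And>x a b. (x,a)\<in>G \<Longrightarrow> (x,b)\<in>G \<Longrightarrow> a = b"
    and gadd: "\<And>x a z b. (x,a)\<in>G \<Longrightarrow> (z,b)\<in>G \<Longrightarrow> (x+z,a+b)\<in>G"
    and gsc: "\<And>x a t. (x,a)\<in>G \<Longrightarrow> (t *\<^sub>R x, t*a)\<in>G"
    and gp: "\<And>x a. (x,a)\<in>G \<Longrightarrow> a \<le> p x" using G unfolding pf_def by blast+
  define F where "F x = (THE a. (x,a) \<in> G)" for x
  have FG: "(x, F x) \<in> G" for x
    unfolding F_def using dom[of x] uniq by (metis theI)
  have Feq: "F x = a" if "(x,a) \<in> G" for x a using uniq FG that by blast
  have "linear F"
  proof (rule linearI)
    fix x z show "F (x + z) = F x + F z" using Feq gadd FG by blast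
  next
    fix r x show "F (r *\<^sub>R x) = r *\<^sub>R F x" using Feq gsc FG by simp
  qed
  moreover have "\<forall>x. F x \<le> p x" using gp FG by blast
  ultimately show ?thesis by blast
qed



lemma separation:
  fixes D :: "'v::real_normed_vector set"
  assumes cvx: "convex D" and ne: "D \<noteq> {}" and d: "d > 0" and far: "\<And>w. w \<in> D \<Longrightarrow> d \<le> norm w"
  shows "\<exists>F. linear F \<and> (\<forall>z. \<bar>F z\<bar> \<le> norm z) \<and> (\<forall>w\<in>D. d \<le> F w)"
proof -
  define S where "S z = {norm (z + l *\<^sub>R w) - l * d | l w. l \<ge> 0 \<and> w \<in> D}" for z
  define P where "P z = Inf (S z)" for z
  obtain w0 where w0: "w0 \<in> D" using ne by blast
  have Sne: "S z \<noteq> {}" for z unfolding S_def using w0 by blast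
  have Sbdd: "bdd_below (S z)" for z
  proof (rule bdd_belowI)
    fix e assume "e \<in> S z"
    then obtain l w where e: "e = norm (z + l *\<^sub>R w) - l * d" "l \<ge> 0" "w \<in> D" unfolding S_def by blast
    have "norm (l *\<^sub>R w) \<le> norm (z + l *\<^sub>R w) + norm z" using norm_triangle_ineq4[of "z + l *\<^sub>R w" z] by simp
    moreover have "l * d \<le> norm (l *\<^sub>R w)" using e far[OF e(3)] by (simp add: mult_left_mono)
    ultimately show "- norm z \<le> e" using e by linarith
  qed
  have Plow: "P z \<le> e" if "e \<in> S z" for z e unfolding P_def using cInf_lower[OF that Sbdd] .
  have Pgr: "x \<le> P z" if "\<And>e. e \<in> S z \<Longrightarrow> x \<le> e" for x z unfolding P_def using cInf_greatest[OF Sne that] .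
  have Pnorm: "P z \<le> norm z" for z using Plow[of "norm (z + 0 *\<^sub>R w0) - 0 * d" z] w0 unfolding S_def by force
  have Padd: "P (x + y) \<le> P x + P y" for x y
  proof -
    have key: "P (x + y) \<le> e1 + e2" if e1: "e1 \<in> S x" and e2: "e2 \<in> S y" for e1 e2
    proof -
      obtain l1 w1 where h1: "e1 = norm (x + l1 *\<^sub>R w1) - l1 * d" "l1 \<ge> 0" "w1 \<in> D" using e1 unfolding S_def by blast
      obtain l2 w2 where h2: "e2 = norm (y + l2 *\<^sub>R w2) - l2 * d" "l2 \<ge> 0" "w2 \<in> D" using e2 unfolding S_def by blast
      show ?thesis
      proof (cases "l1 + l2 = 0")
        case True
        then have "l1 = 0" "l2 = 0" using h1 h2 by auto
        then have "norm (x + y + 0 *\<^sub>R w1) - 0 * d \<in> S (x + y)" using h1 unfolding S_def by blast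
        then have "P (x + y) \<le> norm (x + y)" using Plow by force
        also have "\<dots> \<le> e1 + e2" using h1 h2 \<open>l1 = 0\<close> \<open>l2 = 0\<close> norm_triangle_ineq[of x y] by simp
        finally show ?thesis .
      next
        case False
        define L where "L = l1 + l2"
        have L: "L > 0" using False h1 h2 L_def by simp
        define w where "w = (l1 / L) *\<^sub>R w1 + (l2 / L) *\<^sub>R w2"
        have wD: "w \<in> D" unfolding w_def
          by (rule convexD[OF cvx h1(3) h2(3)]) (use L h1 h2 L_def in \<open>auto simp: add_divide_distrib[symmetric]\<close>)
        have Lw: "L *\<^sub>R w = l1 *\<^sub>R w1 + l2 *\<^sub>R w2" using L unfolding w_def by (simp add: algebra_simps)
        have "norm (x + y + L *\<^sub>R w) - L * d \<in> S (x + y)" using wD L unfolding S_def by force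
        then have "P (x + y) \<le> norm (x + y + L *\<^sub>R w) - L * d" using Plow by blast
        also have "norm (x + y + L *\<^sub>R w) \<le> norm (x + l1 *\<^sub>R w1) + norm (y + l2 *\<^sub>R w2)"
          using Lw norm_triangle_ineq[of "x + l1 *\<^sub>R w1" "y + l2 *\<^sub>R w2"] by (simp add: algebra_simps)
        finally show ?thesis using h1 h2 L_def by (simp add: algebra_simps)
      qed
    qed
    have "P (x + y) - P y \<le> P x"
    proof (rule Pgr)
      fix e1 assume e1: "e1 \<in> S x"
      have "P (x + y) - e1 \<le> P y" by (rule Pgr) (use key e1 in force)
      then show "P (x + y) - P y \<le> e1" by linarith
    qed
    then show ?thesis by linarith
  qed
  have Phom: "P (t *\<^sub>R x) \<le> t * P x" if t: "t > 0" for t x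
  proof -
    have "P (t *\<^sub>R x) / t \<le> P x"
    proof (rule Pgr)
      fix e assume "e \<in> S x"
      then obtain l w where h: "e = norm (x + l *\<^sub>R w) - l * d" "l \<ge> 0" "w \<in> D" unfolding S_def by blast
      have "norm (t *\<^sub>R x + (t * l) *\<^sub>R w) - (t * l) * d \<in> S (t *\<^sub>R x)" using h t unfolding S_def by force
      then have "P (t *\<^sub>R x) \<le> norm (t *\<^sub>R x + (t * l) *\<^sub>R w) - (t * l) * d" using Plow by blast
      also have "norm (t *\<^sub>R x + (t * l) *\<^sub>R w) = t * norm (x + l *\<^sub>R w)"
      proof -
        have "t *\<^sub>R x + (t * l) *\<^sub>R w = t *\<^sub>R (x + l *\<^sub>R w)" by (simp add: algebra_simps)
        then show ?thesis using t by simp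
      qed
      finally have le: "P (t *\<^sub>R x) \<le> t * norm (x + l *\<^sub>R w) - (t * l) * d" .
      have "t * e = t * norm (x + l *\<^sub>R w) - (t * l) * d" unfolding h(1) by (simp add: algebra_simps)
      then have "P (t *\<^sub>R x) \<le> t * e" using le by linarith
      then show "P (t *\<^sub>R x) / t \<le> e" using t by (simp add: divide_le_eq mult.commute)
    qed
    then show ?thesis using t by (simp add: divide_le_eq mult.commute)
  qed
  obtain F where F: "linear F" "\<And>x. F x \<le> P x" using hahn_banach[of P, OF Padd Phom] by blast
  have "\<bar>F z\<bar> \<le> norm z" for z
  proof -
    have "F z \<le> norm z" using F(2) Pnorm order_trans by blast
    moreover have "F (- z) \<le> norm (- z)" using F(2) Pnorm order_trans by blast
    moreover have "F (- z) = - F z" using linear_neg[OF F(1)] .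
    ultimately show ?thesis by simp
  qed
  moreover have "d \<le> F w" if w: "w \<in> D" for w
  proof -
    have "norm (- w + 1 *\<^sub>R w) - 1 * d \<in> S (- w)" unfolding S_def mem_Collect_eq by (rule exI[of _ 1], rule exI[of _ w]) (simp add: w)
    then have "P (- w) \<le> - d" using Plow by force
    then have "F (- w) \<le> - d" using F(2) order_trans by blast
    then show ?thesis using linear_neg[OF F(1)] by simp
  qed
  ultimately show ?thesis using F(1) by blast
qed



lemma epi_closed:
  fixes f :: "'a::real_normed_vector \<Rightarrow> ereal"
  assumes "lsc_fun f"
  shows "closed {p. f (fst p) \<le> ereal (snd p)}"
proof -
  have "open (- {p. f (fst p) \<le> ereal (snd p)})"
  proof (subst open_subopen, intro ballI)
    fix p assume "p \<in> - {p. f (fst p) \<le> ereal (snd p)}"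
    then have "ereal (snd p) < f (fst p)" by auto
    then obtain t' where t': "ereal (snd p) < ereal t'" "ereal t' < f (fst p)" using ereal_dense2 by blast
    define T where "T = (- {y. f y \<le> ereal t'}) \<times> {..<t'}"
    have cl: "closed {y. f y \<le> ereal t'}" using assms unfolding lsc_fun_def by blast
    have "open T" unfolding T_def
    proof (rule open_Times)
      show "open (- {y. f y \<le> ereal t'})" using cl by (rule open_Compl)
    qed (rule open_lessThan)
    moreover have "p \<in> T" unfolding T_def using t' by (cases p) auto
    moreover have "T \<subseteq> - {p. f (fst p) \<le> ereal (snd p)}"
    proof
      fix q assume "q \<in> T"
      then have "ereal t' < f (fst q)" "snd q < t'" unfolding T_def by auto
      then have "ereal (snd q) < f (fst q)" using less_trans[of "ereal (snd q)" "ereal t'"] by simp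
      then show "q \<in> - {p. f (fst p) \<le> ereal (snd p)}" by auto
    qed
    ultimately show "\<exists>T. open T \<and> p \<in> T \<and> T \<subseteq> - {p. f (fst p) \<le> ereal (snd p)}" by blast
  qed
  then show ?thesis unfolding closed_def .
qed
lemma epi_convex:
  fixes f :: "'a::real_normed_vector \<Rightarrow> ereal"
  assumes "convex_efun f"
  shows "convex {p. f (fst p) \<le> ereal (snd p)}"
proof (rule convexI)
  fix p q and u v :: real
  assume p: "p \<in> {p. f (fst p) \<le> ereal (snd p)}" and q: "q \<in> {p. f (fst p) \<le> ereal (snd p)}"
    and uv0: "0 \<le> u" "0 \<le> v" "u + v = 1"
  have uv: "0 \<le> u \<and> 0 \<le> v \<and> u + v = 1" using uv0 by simp
  show "u *\<^sub>R p + v *\<^sub>R q \<in> {p. f (fst p) \<le> ereal (snd p)}"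
  proof (cases "v = 0 \<or> u = 0")
    case True
    then have "(u = 1 \<and> v = 0) \<or> (u = 0 \<and> v = 1)" using uv by auto
    then show ?thesis
    proof
      assume "u = 1 \<and> v = 0" then show ?thesis using p by simp
    next
      assume "u = 0 \<and> v = 1" then show ?thesis using q by simp
    qed
  next
    case False
    then have v: "0 < v" "v < 1" and u: "u = 1 - v" using uv by auto
    have "f ((1 - v) *\<^sub>R fst p + v *\<^sub>R fst q) \<le> ereal (1 - v) * f (fst p) + ereal v * f (fst q)"
      using assms v unfolding convex_efun_def by blast
    also have "\<dots> \<le> ereal (1 - v) * ereal (snd p) + ereal v * ereal (snd q)"
      using p q v by (intro add_mono ereal_mult_left_mono) auto
    finally have le: "f ((1 - v) *\<^sub>R fst p + v *\<^sub>R fst q) \<le> ereal ((1 - v) * snd p + v * snd q)" by simp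
    have eq: "u *\<^sub>R p + v *\<^sub>R q = ((1 - v) *\<^sub>R fst p + v *\<^sub>R fst q, (1 - v) * snd p + v * snd q)"
      unfolding u by (cases p, cases q) simp
    show ?thesis unfolding eq mem_Collect_eq fst_conv snd_conv by (rule le)
  qed
qed



lemma sep_epi:
  fixes f :: "'a::real_normed_vector \<Rightarrow> ereal"
  assumes lsc: "lsc_fun f" and cvx: "convex_efun f" and pr: "proper_efun f"
    and cx: "ereal c < f x"
  shows "\<exists>\<phi> \<beta> d. bounded_linear \<phi> \<and> 0 < d \<and> 0 \<le> \<beta> \<and>
           (\<forall>y t. f y \<le> ereal t \<longrightarrow> d \<le> \<phi> (y - x) + \<beta> * (t - c))"
proof -
  define K where "K = {p. f (fst p) \<le> ereal (snd p)}"
  define D where "D = (\<lambda>b. b - (x,c)) ` K"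
  obtain y0 v where y0: "f y0 = ereal v"
    using pr unfolding proper_efun_def by (metis ereal_cases)
  have "(y0, v) \<in> K" unfolding K_def using y0 by simp
  then have Dne: "D \<noteq> {}" unfolding D_def by blast
  have Dcvx: "convex D" unfolding D_def K_def using epi_convex[OF cvx] by (rule convex_translation_subtract)
  have "(x, c) \<in> - K" unfolding K_def using cx by auto
  moreover have "open (- K)" using epi_closed[OF lsc] unfolding K_def closed_def .
  ultimately obtain e where e: "e > 0" "ball (x,c) e \<subseteq> - K" using open_contains_ball by blast
  have far: "e \<le> norm w" if wD: "w \<in> D" for w
  proof -
    obtain k where k: "k \<in> K" "w = k - (x,c)" using wD unfolding D_def by blast
    then have "k \<notin> ball (x,c) e" using e by blast
    then show ?thesis using k by (simp add: dist_norm norm_minus_commute)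
  qed
  obtain F where F: "linear F" "\<And>z. \<bar>F z\<bar> \<le> norm z" "\<And>w. w \<in> D \<Longrightarrow> e \<le> F w"
    using separation[OF Dcvx Dne e(1) far] by blast
  define \<phi> where "\<phi> y = F (y, 0)" for y
  define \<beta> where "\<beta> = F (0, 1)"
  have Fdec: "F (a, b) = \<phi> a + \<beta> * b" for a b
  proof -
    have "(a, b) = (a, 0) + b *\<^sub>R (0, 1)" by simp
    then have "F (a, b) = F (a, 0) + F (b *\<^sub>R (0, 1))" using linear_add[OF F(1)] by metis
    moreover have "F (b *\<^sub>R (0, 1)) = b * F (0, 1)" using linear_cmul[OF F(1), of b "(0,1)"] by simp
    ultimately show ?thesis unfolding \<phi>_def \<beta>_def by simp
  qed
  have bl: "bounded_linear \<phi>"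
  proof (rule bounded_linear_intro[where K = 1])
    fix a b show "\<phi> (a + b) = \<phi> a + \<phi> b" unfolding \<phi>_def using linear_add[OF F(1), of "(a,0)" "(b,0)"] by simp
  next
    fix r a show "\<phi> (r *\<^sub>R a) = r *\<^sub>R \<phi> a" unfolding \<phi>_def using linear_cmul[OF F(1), of r "(a,0)"] by simp
  next
    fix a show "norm (\<phi> a) \<le> norm a * 1" unfolding \<phi>_def using F(2)[of "(a,0)"] by (simp add: norm_Pair)
  qed
  have main: "e \<le> \<phi> (y - x) + \<beta> * (t - c)" if "f y \<le> ereal t" for y t
  proof -
    have "(y, t) \<in> K" unfolding K_def using that by simp
    then have "(y - x, t - c) \<in> D" unfolding D_def by force
    then show ?thesis using F(3) Fdec by force
  qed
  have "0 \<le> \<beta>"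
  proof (rule ccontr)
    assume "\<not> 0 \<le> \<beta>"
    then have b: "\<beta> < 0" by simp
    define A where "A = \<phi> (y0 - x) + \<beta> * (v - c)"
    define s where "s = (\<bar>A\<bar> + 1) / (- \<beta>)"
    have "f y0 \<le> ereal (v + s)"
      using y0 b by (simp add: s_def divide_nonneg_neg)
    then have "e \<le> \<phi> (y0 - x) + \<beta> * (v + s - c)" by (rule main)
    also have "\<dots> = A + \<beta> * s" unfolding A_def by (simp add: algebra_simps)
    also have "\<beta> * s = - (\<bar>A\<bar> + 1)" unfolding s_def using b by simp
    finally show False using e(1) by linarith
  qed
  then show ?thesis using bl e(1) main by blast
qed



lemma conj_bound:
  fixes f :: "'a::real_normed_vector \<Rightarrow> ereal"
  assumes nm: "\<And>y. f y \<noteq> -\<infinity>" and B: "\<And>y v. f y = ereal v \<Longrightarrow> blinfun_apply ys y - v \<le> B"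
  shows "fconj f ys \<le> ereal B"
  unfolding fconj_def
proof (rule SUP_least)
  fix y
  show "ereal (blinfun_apply ys y) - f y \<le> ereal B"
  proof (cases "f y")
    case (real v) then show ?thesis using B[of y v] by simp
  next
    case PInf then show ?thesis by simp
  next
    case MInf then show ?thesis using nm by simp
  qed
qed

lemma conj_bound_minus:
  assumes "F \<le> ereal B"
  shows "ereal (a - B) \<le> ereal a - F"
  using assms by (cases F) auto

lemma conj_pos:
  fixes f :: "'a::real_normed_vector \<Rightarrow> ereal"
  assumes nm: "\<And>y. f y \<noteq> -\<infinity>"
    and bl: "bounded_linear \<phi>" and d: "0 < d" and b: "0 < \<beta>"
    and H: "\<forall>y t. f y \<le> ereal t \<longrightarrow> d \<le> \<phi> (y - x) + \<beta> * (t - c)"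
  shows "\<exists>ys. fconj f ys \<le> ereal (blinfun_apply ys x - c - d / \<beta>)"
proof -
  define g where "g z = (-1/\<beta>) * \<phi> z" for z
  have blg: "bounded_linear g" unfolding g_def by (rule bounded_linear_const_mult[OF bl])
  define ys where "ys = Blinfun g"
  have ysa: "blinfun_apply ys = g" unfolding ys_def using bounded_linear_Blinfun_apply[OF blg] .
  have "fconj f ys \<le> ereal (blinfun_apply ys x - c - d / \<beta>)"
  proof (rule conj_bound[OF nm])
    fix y v assume fy: "f y = ereal v"
    have "d \<le> \<phi> (y - x) + \<beta> * (v - c)" using H fy by simp
    then have "d \<le> \<phi> y - \<phi> x + \<beta> * (v - c)" using linear_simps(2)[OF bl] by simp
    then have "d / \<beta> \<le> (\<phi> y - \<phi> x + \<beta> * (v - c)) / \<beta>" using b by (simp add: divide_right_mono)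
    also have "\<dots> = \<phi> y / \<beta> - \<phi> x / \<beta> + (v - c)" using b by (simp add: field_simps)
    finally show "blinfun_apply ys y - v \<le> blinfun_apply ys x - c - d / \<beta>"
      unfolding ysa g_def by simp
  qed
  then show ?thesis by blast
qed

lemma fconj_not_minf:
  fixes f :: "'a::real_normed_vector \<Rightarrow> ereal"
  assumes "proper_efun f"
  shows "fconj f ys \<noteq> -\<infinity>"
proof -
  obtain x0 v where "f x0 = ereal v" using assms unfolding proper_efun_def by (metis ereal_cases)
  have "ereal (blinfun_apply ys x0) - f x0 \<le> fconj f ys"
    unfolding fconj_def by (rule SUP_upper) simp
  then show ?thesis using \<open>f x0 = ereal v\<close> by auto
qed

lemma fenchel_moreau_lb:
  fixes f :: "'a::real_normed_vector \<Rightarrow> ereal"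
  assumes lsc: "lsc_fun f" and cvx: "convex_efun f" and pr: "proper_efun f"
    and cx: "ereal c < f x"
  shows "\<exists>ys. ereal c < ereal (blinfun_apply ys x) - fconj f ys"
proof -
  have nm: "\<And>y. f y \<noteq> -\<infinity>" using pr unfolding proper_efun_def by blast
  obtain \<phi> \<beta> d where bl: "bounded_linear \<phi>" and d: "0 < d" and b: "0 \<le> \<beta>"
    and H: "\<forall>y t. f y \<le> ereal t \<longrightarrow> d \<le> \<phi> (y - x) + \<beta> * (t - c)"
    using sep_epi[OF lsc cvx pr cx] by blast
  show ?thesis
  proof (cases "\<beta> > 0")
    case True
    obtain ys where ys: "fconj f ys \<le> ereal (blinfun_apply ys x - c - d / \<beta>)"
      using conj_pos[OF nm bl d True H] by blast
    have "ereal (blinfun_apply ys x - (blinfun_apply ys x - c - d / \<beta>)) \<le> ereal (blinfun_apply ys x) - fconj f ys"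
      by (rule conj_bound_minus[OF ys])
    moreover have "ereal c < ereal (blinfun_apply ys x - (blinfun_apply ys x - c - d / \<beta>))" using d True by simp
    ultimately have "ereal c < ereal (blinfun_apply ys x) - fconj f ys" by (rule order.strict_trans2[rotated])
    then show ?thesis by blast
  next
    case False
    then have b0: "\<beta> = 0" using b by simp
    obtain x0 v where x0: "f x0 = ereal v" using pr unfolding proper_efun_def by (metis ereal_cases)
    have cx0: "ereal (v - 1) < f x0" using x0 by simp
    obtain \<phi>0 \<beta>0 d0 where bl0: "bounded_linear \<phi>0" and d0: "0 < d0" and b0': "0 \<le> \<beta>0"
      and H0: "\<forall>y t. f y \<le> ereal t \<longrightarrow> d0 \<le> \<phi>0 (y - x0) + \<beta>0 * (t - (v - 1))"
      using sep_epi[OF lsc cvx pr cx0] by blast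
    have "\<beta>0 > 0"
    proof (rule ccontr)
      assume "\<not> \<beta>0 > 0"
      then have "\<beta>0 = 0" using b0' by simp
      moreover have "d0 \<le> \<phi>0 (x0 - x0) + \<beta>0 * (v - (v - 1))" using H0 x0 by (metis order_refl)
      ultimately show False using d0 linear_simps(3)[OF bl0] by simp
    qed
    then obtain ys0 where ys0: "fconj f ys0 \<le> ereal (blinfun_apply ys0 x0 - (v - 1) - d0 / \<beta>0)"
      using conj_pos[OF nm bl0 d0 _ H0] by blast
    define M where "M = blinfun_apply ys0 x0 - (v - 1) - d0 / \<beta>0"
    have M: "blinfun_apply ys0 y - w \<le> M" if "f y = ereal w" for y w
    proof -
      have "ereal (blinfun_apply ys0 y) - f y \<le> fconj f ys0"
        unfolding fconj_def by (rule SUP_upper) simp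
      then have "ereal (blinfun_apply ys0 y - w) \<le> fconj f ys0" using that by simp
      then have "ereal (blinfun_apply ys0 y - w) \<le> ereal M" using ys0 unfolding M_def by (rule order.trans)
      then show ?thesis by simp
    qed
    define s where "s = max 0 ((c - blinfun_apply ys0 x + M + 1) / d)"
    have s0: "0 \<le> s" unfolding s_def by simp
    have sd: "c - blinfun_apply ys0 x + M + 1 \<le> s * d"
    proof -
      have "(c - blinfun_apply ys0 x + M + 1) / d \<le> s" unfolding s_def by simp
      then show ?thesis using d by (simp add: divide_le_eq)
    qed
    define g where "g z = blinfun_apply ys0 z - s * \<phi> z" for z
    have blg: "bounded_linear g" unfolding g_def
      by (intro bounded_linear_sub bounded_linear_const_mult bl blinfun.bounded_linear_right)
    define ys where "ys = Blinfun g"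
    have ysa: "blinfun_apply ys = g" unfolding ys_def using bounded_linear_Blinfun_apply[OF blg] .
    have "fconj f ys \<le> ereal (M - s * \<phi> x - s * d)"
    proof (rule conj_bound[OF nm])
      fix y w assume fy: "f y = ereal w"
      have "d \<le> \<phi> (y - x) + \<beta> * (w - c)" using H fy by (metis order_refl)
      then have "d \<le> \<phi> (y - x)" using b0 by simp
      then have "d \<le> \<phi> y - \<phi> x" using linear_simps(2)[OF bl] by simp
      then have "s * d \<le> s * (\<phi> y - \<phi> x)" using s0 by (simp add: mult_left_mono)
      moreover have "blinfun_apply ys0 y - w \<le> M" using M[OF fy] .
      ultimately show "blinfun_apply ys y - w \<le> M - s * \<phi> x - s * d"
        unfolding ysa g_def by (simp add: algebra_simps)
    qed
    then have "ereal (blinfun_apply ys x - (M - s * \<phi> x - s * d)) \<le> ereal (blinfun_apply ys x) - fconj f ys"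
      by (rule conj_bound_minus)
    moreover have "ereal c < ereal (blinfun_apply ys x - (M - s * \<phi> x - s * d))"
      using sd unfolding ysa g_def by simp
    ultimately have "ereal c < ereal (blinfun_apply ys x) - fconj f ys" by (rule order.strict_trans2[rotated])
    then show ?thesis by blast
  qed
qed



lemma ereal_below: "v \<noteq> -\<infinity> \<Longrightarrow> \<exists>b. ereal b < v"
  by (cases v) (auto intro: exI[of _ "real_of_ereal v - 1"])

lemma ereal_split_lt:
  fixes u v :: ereal
  assumes u: "u \<noteq> -\<infinity>" and v: "v \<noteq> -\<infinity>" and z: "ereal z < u + v"
  shows "\<exists>a b. ereal a < u \<and> ereal b < v \<and> z < a + b"
proof (cases u)
  case (real p)
  show ?thesis
  proof (cases v)
    case (real q)
    define e where "e = (p + q - z) / 3"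
    have "z < p + q" using z \<open>u = ereal p\<close> real by simp
    then have "e > 0" unfolding e_def by simp
    then show ?thesis using \<open>u = ereal p\<close> real
      by (intro exI[of _ "p - e"] exI[of _ "q - e"]) (auto simp: e_def field_simps)
  next
    case PInf
    then show ?thesis using \<open>u = ereal p\<close> by (intro exI[of _ "p - 1"] exI[of _ "z - p + 2"]) auto
  next
    case MInf then show ?thesis using v by simp
  qed
next
  case PInf
  obtain b where b: "ereal b < v" using ereal_below[OF v] by blast
  then show ?thesis using PInf by (intro exI[of _ "z - b + 1"] exI[of _ b]) auto
next
  case MInf then show ?thesis using u by simp
qed

lemma ereal_sum_le:
  fixes u v w :: ereal
  assumes u: "u \<noteq> -\<infinity>" and v: "v \<noteq> -\<infinity>"
    and H: "\<And>a b. ereal a < u \<Longrightarrow> ereal b < v \<Longrightarrow> ereal (a + b) \<le> w"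
  shows "u + v \<le> w"
proof (rule ereal_le_real)
  fix z assume wz: "w \<le> ereal z"
  show "u + v \<le> ereal z"
  proof (rule ccontr)
    assume "\<not> u + v \<le> ereal z"
    then have "ereal z < u + v" by simp
    then obtain a b where ab: "ereal a < u" "ereal b < v" "z < a + b" using ereal_split_lt[OF u v] by blast
    have "ereal (a + b) \<le> ereal z" using H[OF ab(1,2)] wz by (rule order.trans)
    then show False using ab(3) by simp
  qed
qed

theorem lemma4p1:
  fixes f :: "'a::banach \<Rightarrow> ereal"
    and h :: "'a \<times> ('a \<Rightarrow>\<^sub>L real) \<Rightarrow> ereal"
  assumes "reflexive_space TYPE('a)"
    and "lsc_fun f" and "proper_efun f" and "convex_efun f"
    and "h \<in> repr_family (subdiff f)"
    and "\<And>x xs. h (x, xs) \<le> f x + fconj f xs"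
  shows "h (x, xs) + conj2 h (xs, x) \<ge> ereal (blinfun_apply xs x) + f x + fconj f xs"
proof -
  note lsc = assms(2) and pr = assms(3) and cvx = assms(4) and hup = assms(6)
  have hlow: "ereal (blinfun_apply ys y) \<le> h (y, ys)" for y ys
    using assms(5) unfolding repr_family_def by blast
  have nm: "\<And>y. f y \<noteq> -\<infinity>" using pr unfolding proper_efun_def by blast
  have key: "f x + fconj f xs \<le> conj2 h (xs, x)"
  proof (rule ereal_sum_le[OF nm fconj_not_minf[OF pr]])
    fix a b assume a: "ereal a < f x" and b: "ereal b < fconj f xs"
    obtain ys where ys: "ereal a < ereal (blinfun_apply ys x) - fconj f ys"
      using fenchel_moreau_lb[OF lsc cvx pr a] by blast
    obtain r where r: "fconj f ys = ereal r"
      using ys fconj_not_minf[OF pr, of ys] by (cases "fconj f ys") auto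
    have ar: "a < blinfun_apply ys x - r" using ys r by simp
    obtain y where y: "ereal b < ereal (blinfun_apply xs y) - f y"
      using b unfolding fconj_def by (auto simp: less_SUP_iff)
    obtain w where w: "f y = ereal w" using y nm[of y] by (cases "f y") auto
    have bw: "b < blinfun_apply xs y - w" using y w by simp
    have "ereal (blinfun_apply xs y + blinfun_apply ys x) - h (y, ys) \<le> conj2 h (xs, x)"
      unfolding conj2_def by (rule SUP_upper2[where i="(y,ys)"]) auto
    moreover have "ereal (blinfun_apply xs y + blinfun_apply ys x) - (f y + fconj f ys)
        \<le> ereal (blinfun_apply xs y + blinfun_apply ys x) - h (y, ys)"
      by (rule ereal_minus_mono[OF order_refl hup])
    moreover have "ereal (a + b) \<le> ereal (blinfun_apply xs y + blinfun_apply ys x) - (f y + fconj f ys)"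
      using ar bw w r by simp
    ultimately show "ereal (a + b) \<le> conj2 h (xs, x)" by simp
  qed
  have "ereal (blinfun_apply xs x) + f x + fconj f xs = ereal (blinfun_apply xs x) + (f x + fconj f xs)"
    by (simp add: add.assoc)
  also have "\<dots> \<le> h (x, xs) + conj2 h (xs, x)" by (rule add_mono[OF hlow key])
  finally show ?thesis .
qed


end
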